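(* Let $(P,A,\lambda)$ be a marked poset and $(U_1,U_2)$ an admissible decomposition of it. Then for every $N\in\mathbb{N}$, $S_{U_1,U_2}(N\lambda)$ equals the $N$-fold Minkowski sum $S_{U_1,U_2}(\lambda)+\cdots+S_{U_1,U_2}(\lambda)$.
   Context: A marked poset is a triple $(P,A,\lambda)$ where $(P,\prec)$ is a finite poset, $A\subseteq P$ contains all minimal and all maximal elements of $P$, and $\lambda:A\to\mathbb{Z}_{\ge 0}$, $a\mapsto\lambda_a$. A decomposition of $(P,A,\lambda)$ is a pair $(U_1,U_2)$ of disjoint sets with $U_1\cup U_2=P\setminus A$; it is admissible if there are no $u_1\in U_1$, $u_2\in U_2$ with $u_1\prec u_2$. Put $A_1=A\cup U_1$. The marked chain-order polytope $\mathcal{CO}_{U_1,U_2}(\lambda)\subset\mathbb{R}^{P\setminus A}$ is the set of $(x_p)_{p\in P\setminus A}$ such that: (i) $x_p\le\lambda_a$ whenever $p\in U_1$, $a\in A$, $p\prec a$; (ii) $\lambda_b\le x_q$ whenever $q\in U_1$, $b\in A$, $b\prec q$; (iii) $x_p\le x_q$ whenever $p,q\in U_1$, $p\prec q$; (iv) $x_p\ge0$ for $p\in U_2$; (v) for every chain $b\prec p_n\prec\cdots\prec p_1\prec a$ with $n\ge1$, $a,b\in A_1$, $p_i\in U_2$: $x_{p_1}+\cdots+x_{p_n}\le\lambda_a-\lambda_b$, where $\lambda_q$ means $x_q$ for $q\in U_1$; (vi) for every chain $p_1\prec\cdots\prec p_s\prec q$ with $q\in U_1$, $p_i\in U_2$: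 $x_{p_1}+\cdots+x_{p_s}\le x_q$. Set $S_{U_1,U_2}(\lambda)=\mathcal{CO}_{U_1,U_2}(\lambda)\cap\mathbb{Z}_{\ge0}^{P\setminus A}$; $N\lambda$ is the marking $a\mapsto N\lambda_a$. *)

theory Defs
  imports Complex_Main
begin

text \<open>A marked poset (P, A, lambda): P a finite carrier, lt the strict order on P,
  A a subset of P containing all minimal and maximal elements, lambda valued in
  nonnegative integers (only its values on A matter).\<close>

definition marked_poset :: "'a set \<Rightarrow> ('a \<Rightarrow> 'a \<Rightarrow> bool) \<Rightarrow> 'a set \<Rightarrow> bool" where
  "marked_poset P lt A \<longleftrightarrow>
     finite P \<and>
     (\<forall>p\<in>P. \<not> lt p p) \<and>
     (\<forall>p\<in>P. \<forall>q\<in>P. \<forall>r\<in>P. lt p q \<longrightarrow> lt q r \<longrightarrow> lt p r) \<and>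
     A \<subseteq> P \<and>
     (\<forall>p\<in>P. (\<not> (\<exists>q\<in>P. lt q p)) \<longrightarrow> p \<in> A) \<and>
     (\<forall>p\<in>P. (\<not> (\<exists>q\<in>P. lt p q)) \<longrightarrow> p \<in> A)"

definition decomposition :: "'a set \<Rightarrow> 'a set \<Rightarrow> 'a set \<Rightarrow> 'a set \<Rightarrow> bool" where
  "decomposition P A U1 U2 \<longleftrightarrow> U1 \<inter> U2 = {} \<and> U1 \<union> U2 = P - A"

definition admissible ::
  "'a set \<Rightarrow> ('a \<Rightarrow> 'a \<Rightarrow> bool) \<Rightarrow> 'a set \<Rightarrow> 'a set \<Rightarrow> 'a set \<Rightarrow> bool" where
  "admissible P lt A U1 U2 \<longleftrightarrow> decomposition P A U1 U2 \<and>
     \<not> (\<exists>u1\<in>U1. \<exists>u2\<in>U2. lt u1 u2)"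

text \<open>Points of R^(P - A) are represented as functions 'a => real vanishing outside P - A.
  For q in U1, lambda_q means x_q.\<close>

definition lamx :: "'a set \<Rightarrow> ('a \<Rightarrow> nat) \<Rightarrow> ('a \<Rightarrow> real) \<Rightarrow> 'a \<Rightarrow> real" where
  "lamx U1 lam x q = (if q \<in> U1 then x q else real (lam q))"

definition chain_order_polytope ::
  "'a set \<Rightarrow> ('a \<Rightarrow> 'a \<Rightarrow> bool) \<Rightarrow> 'a set \<Rightarrow> 'a set \<Rightarrow> 'a set \<Rightarrow> ('a \<Rightarrow> nat)
     \<Rightarrow> ('a \<Rightarrow> real) set" where
  "chain_order_polytope P lt A U1 U2 lam = {x.
     (\<forall>p. p \<notin> P - A \<longrightarrow> x p = 0) \<and>
     (\<forall>p\<in>U1. \<forall>a\<in>A. lt p a \<longrightarrow> x p \<le> real (lam a)) \<and>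
     (\<forall>q\<in>U1. \<forall>b\<in>A. lt b q \<longrightarrow> real (lam b) \<le> x q) \<and>
     (\<forall>p\<in>U1. \<forall>q\<in>U1. lt p q \<longrightarrow> x p \<le> x q) \<and>
     (\<forall>p\<in>U2. 0 \<le> x p) \<and>
     (\<forall>a\<in>A \<union> U1. \<forall>b\<in>A \<union> U1. \<forall>cs. cs \<noteq> [] \<longrightarrow> set cs \<subseteq> U2 \<longrightarrow>
        sorted_wrt lt (b # cs @ [a]) \<longrightarrow>
        sum_list (map x cs) \<le> lamx U1 lam x a - lamx U1 lam x b) \<and>
     (\<forall>q\<in>U1. \<forall>cs. set cs \<subseteq> U2 \<longrightarrow> sorted_wrt lt (cs @ [q]) \<longrightarrow>
        sum_list (map x cs) \<le> x q)}"

definition S_lattice ::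
  "'a set \<Rightarrow> ('a \<Rightarrow> 'a \<Rightarrow> bool) \<Rightarrow> 'a set \<Rightarrow> 'a set \<Rightarrow> 'a set \<Rightarrow> ('a \<Rightarrow> nat)
     \<Rightarrow> ('a \<Rightarrow> int) set" where
  "S_lattice P lt A U1 U2 lam = {x. (\<forall>p. 0 \<le> x p) \<and>
     (\<lambda>p. real_of_int (x p)) \<in> chain_order_polytope P lt A U1 U2 lam}"

definition minkowski_sum :: "('a \<Rightarrow> int) set \<Rightarrow> ('a \<Rightarrow> int) set \<Rightarrow> ('a \<Rightarrow> int) set" where
  "minkowski_sum X Y = {(\<lambda>p. x p + y p) | x y. x \<in> X \<and> y \<in> Y}"

fun minkowski_power :: "nat \<Rightarrow> ('a \<Rightarrow> int) set \<Rightarrow> ('a \<Rightarrow> int) set" where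
  "minkowski_power 0 X = {(\<lambda>p. 0)}"
| "minkowski_power (Suc n) X = minkowski_sum X (minkowski_power n X)"

end

theory Submission
  imports Defs
begin

definition lx :: "'a set \<Rightarrow> ('a \<Rightarrow> nat) \<Rightarrow> ('a \<Rightarrow> int) \<Rightarrow> 'a \<Rightarrow> int" where
  "lx U1 lam x q = (if q \<in> U1 then x q else int (lam q))"

definition Sint where
  "Sint P lt A U1 U2 lam = {x.
     (\<forall>p. 0 \<le> x p) \<and>
     (\<forall>p. p \<notin> P - A \<longrightarrow> x p = 0) \<and>
     (\<forall>p\<in>U1. \<forall>a\<in>A. lt p a \<longrightarrow> x p \<le> int (lam a)) \<and>
     (\<forall>q\<in>U1. \<forall>b\<in>A. lt b q \<longrightarrow> int (lam b) \<le> x q) \<and>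
     (\<forall>p\<in>U1. \<forall>q\<in>U1. lt p q \<longrightarrow> x p \<le> x q) \<and>
     (\<forall>a\<in>A \<union> U1. \<forall>b\<in>A \<union> U1. \<forall>cs. cs \<noteq> [] \<longrightarrow> set cs \<subseteq> U2 \<longrightarrow>
        sorted_wrt lt (b # cs @ [a]) \<longrightarrow>
        sum_list (map x cs) \<le> lx U1 lam x a - lx U1 lam x b) \<and>
     (\<forall>q\<in>U1. \<forall>cs. set cs \<subseteq> U2 \<longrightarrow> sorted_wrt lt (cs @ [q]) \<longrightarrow>
        sum_list (map x cs) \<le> x q)}"

lemma lamx_lx: "lamx U1 lam (\<lambda>p. real_of_int (x p)) q = real_of_int (lx U1 lam x q)"
  by (simp add: lamx_def lx_def)

lemma sl_real: "sum_list (map (\<lambda>p. real_of_int (x p)) cs) = real_of_int (sum_list (map x cs))"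
  using sum_list_of_int[of "map x cs", where 'a=real] by (simp add: comp_def)

lemma r1: "(real n \<le> real_of_int y) = (int n \<le> y)" by linarith
lemma r2: "(real_of_int y \<le> real n) = (y \<le> int n)" by linarith

lemma d1: "real_of_int a - real_of_int b = real_of_int (a - b)" by simp
lemma d2: "(real_of_int a \<le> real_of_int b) = (a \<le> b)" by simp
lemma d3: "(0 \<le> real_of_int a) = (0 \<le> a)" by simp
lemma d4: "(real_of_int a = 0) = (a = 0)" by simp

lemma poly_int: "((\<lambda>p. real_of_int (x p)) \<in> chain_order_polytope P lt A U1 U2 lam) =
    ((\<forall>p. p \<notin> P - A \<longrightarrow> x p = 0) \<and>
     (\<forall>p\<in>U1. \<forall>a\<in>A. lt p a \<longrightarrow> x p \<le> int (lam a)) \<and>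
     (\<forall>q\<in>U1. \<forall>b\<in>A. lt b q \<longrightarrow> int (lam b) \<le> x q) \<and>
     (\<forall>p\<in>U1. \<forall>q\<in>U1. lt p q \<longrightarrow> x p \<le> x q) \<and>
     (\<forall>p\<in>U2. 0 \<le> x p) \<and>
     (\<forall>a\<in>A \<union> U1. \<forall>b\<in>A \<union> U1. \<forall>cs. cs \<noteq> [] \<longrightarrow> set cs \<subseteq> U2 \<longrightarrow>
        sorted_wrt lt (b # cs @ [a]) \<longrightarrow>
        sum_list (map x cs) \<le> lx U1 lam x a - lx U1 lam x b) \<and>
     (\<forall>q\<in>U1. \<forall>cs. set cs \<subseteq> U2 \<longrightarrow> sorted_wrt lt (cs @ [q]) \<longrightarrow>
        sum_list (map x cs) \<le> x q))"
  unfolding chain_order_polytope_def mem_Collect_eq lamx_lx sl_real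
  by (simp only: d1 d2 d3 d4 r1 r2)

lemma S_eq: "S_lattice P lt A U1 U2 lam = Sint P lt A U1 U2 lam"
proof (rule set_eqI)
  fix x
  show "x \<in> S_lattice P lt A U1 U2 lam \<longleftrightarrow> x \<in> Sint P lt A U1 U2 lam"
    unfolding S_lattice_def Sint_def mem_Collect_eq poly_int by blast
qed

lemma mp_D:
  assumes "marked_poset P lt A"
  shows "finite P" "\<forall>p\<in>P. \<not> lt p p"
    "\<forall>p\<in>P. \<forall>q\<in>P. \<forall>r\<in>P. lt p q \<longrightarrow> lt q r \<longrightarrow> lt p r"
    "A \<subseteq> P" "\<forall>p\<in>P. (\<not> (\<exists>q\<in>P. lt q p)) \<longrightarrow> p \<in> A"
    "\<forall>p\<in>P. (\<not> (\<exists>q\<in>P. lt p q)) \<longrightarrow> p \<in> A"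
proof -
  note H = assms[unfolded marked_poset_def]
  show "finite P" using H by (rule conjunct1)
  show "\<forall>p\<in>P. \<not> lt p p" using H[THEN conjunct2] by (rule conjunct1)
  show "\<forall>p\<in>P. \<forall>q\<in>P. \<forall>r\<in>P. lt p q \<longrightarrow> lt q r \<longrightarrow> lt p r"
    using H[THEN conjunct2, THEN conjunct2] by (rule conjunct1)
  show "A \<subseteq> P" using H[THEN conjunct2, THEN conjunct2, THEN conjunct2] by (rule conjunct1)
  show "\<forall>p\<in>P. (\<not> (\<exists>q\<in>P. lt q p)) \<longrightarrow> p \<in> A"
    using H[THEN conjunct2, THEN conjunct2, THEN conjunct2, THEN conjunct2] by (rule conjunct1)
  show "\<forall>p\<in>P. (\<not> (\<exists>q\<in>P. lt p q)) \<longrightarrow> p \<in> A"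
    using H[THEN conjunct2, THEN conjunct2, THEN conjunct2, THEN conjunct2] by (rule conjunct2)
qed

lemma exists_below:
  assumes mp: "marked_poset P lt A" and "p \<in> P"
  shows "\<exists>b\<in>A. b = p \<or> lt b p"
  using assms(2)
proof (induction "card {q\<in>P. lt q p}" arbitrary: p rule: less_induct)
  case less
  note fin = mp_D(1)[OF mp] and irr = mp_D(2)[OF mp] and tr = mp_D(3)[OF mp]
    and mn = mp_D(5)[OF mp]
  show ?case
  proof (cases "\<exists>q\<in>P. lt q p")
    case False then show ?thesis using mn less.prems by blast
  next
    case True then obtain q where q: "q\<in>P" "lt q p" by blast
    have sub: "{r\<in>P. lt r q} \<subset> {r\<in>P. lt r p}"
    proof (rule psubsetI)
      show "{r\<in>P. lt r q} \<subseteq> {r\<in>P. lt r p}" using tr q less.prems by blast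
      show "{r\<in>P. lt r q} \<noteq> {r\<in>P. lt r p}" using q irr by blast
    qed
    have "card {r\<in>P. lt r q} < card {r\<in>P. lt r p}"
      by (rule psubset_card_mono) (use fin sub in auto)
    from less.hyps[OF this q(1)] obtain b where "b\<in>A" "b = q \<or> lt b q" by blast
    moreover note mp_D(4)[OF mp]
    ultimately show ?thesis using tr q less.prems by (metis subsetD)
  qed
qed

lemma marked_dual: "marked_poset P lt A \<Longrightarrow> marked_poset P (\<lambda>x y. lt y x) A"
  unfolding marked_poset_def by blast

lemma exists_above:
  assumes mp: "marked_poset P lt A" and "p \<in> P"
  shows "\<exists>b\<in>A. b = p \<or> lt p b"
  using exists_below[OF marked_dual[OF mp] assms(2)] by blast

lemma sorted_distinct:
  assumes "\<forall>p\<in>P. \<not> lt p p" "set cs \<subseteq> P" "sorted_wrt lt cs"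
  shows "distinct cs"
  using assms by (induction cs) auto

lemma sorted_last:
  assumes "sorted_wrt lt xs" "xs \<noteq> []" "e \<in> set xs"
  shows "e = last xs \<or> lt e (last xs)"
  using assms by (induction xs) auto

definition Vset :: "('a \<Rightarrow> 'a \<Rightarrow> bool) \<Rightarrow> 'a set \<Rightarrow> 'a set \<Rightarrow> 'a set \<Rightarrow> ('a \<Rightarrow> nat) \<Rightarrow> ('a \<Rightarrow> int) \<Rightarrow> 'a \<Rightarrow> int set" where
  "Vset lt A U1 U2 lam x p = {lx U1 lam x b + sum_list (map x cs) | b cs.
     b \<in> A \<union> U1 \<and> set cs \<subseteq> U2 \<and> cs \<noteq> [] \<and> last cs = p \<and> sorted_wrt lt (b # cs)}"

definition tt where "tt lt A U1 U2 lam x p = Max (Vset lt A U1 U2 lam x p)"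

definition Tmap where
  "Tmap lt A U1 U2 lam x \<phi> p = (if p \<in> U1 then \<phi> (x p) else if p \<in> U2 then
     \<phi> (tt lt A U1 U2 lam x p) - \<phi> (tt lt A U1 U2 lam x p - x p) else 0)"

locale setting =
  fixes P lt A U1 U2 lam x
  assumes mp: "marked_poset P lt A" and adm: "admissible P lt A U1 U2"
    and xS: "x \<in> Sint P lt A U1 U2 lam"
begin

lemmas fin = mp_D(1)[OF mp] and irr = mp_D(2)[OF mp] and tr = mp_D(3)[OF mp]
    and AP = mp_D(4)[OF mp]

lemma U1P: "U1 \<subseteq> P - A" and U2P: "U2 \<subseteq> P - A" and disj: "U1 \<inter> U2 = {}"
  and un: "U1 \<union> U2 = P - A"
  using adm unfolding admissible_def decomposition_def by auto

lemmas xall = xS[unfolded Sint_def mem_Collect_eq]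
lemmas xall0 = xall[THEN conjunct1]
lemmas xi = xall[THEN conjunct2, THEN conjunct2, THEN conjunct1]
lemmas xii = xall[THEN conjunct2, THEN conjunct2, THEN conjunct2, THEN conjunct1]
lemmas xiii = xall[THEN conjunct2, THEN conjunct2, THEN conjunct2, THEN conjunct2, THEN conjunct1]
lemmas xvall = xall[THEN conjunct2, THEN conjunct2, THEN conjunct2, THEN conjunct2, THEN conjunct2, THEN conjunct1]

lemma x0: "0 \<le> x p" using xall0 by blast

lemma xv: "a \<in> A \<union> U1 \<Longrightarrow> b \<in> A \<union> U1 \<Longrightarrow> cs \<noteq> [] \<Longrightarrow> set cs \<subseteq> U2 \<Longrightarrow>
        sorted_wrt lt (b # cs @ [a]) \<Longrightarrow>
        sum_list (map x cs) \<le> lx U1 lam x a - lx U1 lam x b"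
  using xvall by blast

lemma lx0: "0 \<le> lx U1 lam x b" using x0 by (simp add: lx_def)

abbreviation "V \<equiv> Vset lt A U1 U2 lam x"
abbreviation "t \<equiv> tt lt A U1 U2 lam x"

lemma V_fin: "finite (V p)"
proof -
  let ?f = "\<lambda>(b,cs). lx U1 lam x b + sum_list (map x cs)"
  let ?D = "(A \<union> U1) \<times> {cs. set cs \<subseteq> P \<and> length cs \<le> card P}"
  have "V p \<subseteq> ?f ` ?D"
  proof
    fix v assume "v \<in> V p"
    then obtain b cs where v: "v = lx U1 lam x b + sum_list (map x cs)" "b \<in> A \<union> U1"
      "set cs \<subseteq> U2" "sorted_wrt lt (b # cs)" unfolding Vset_def by blast
    have csP: "set cs \<subseteq> P" using v(3) U2P by blast
    have "distinct cs" using sorted_distinct[of P lt cs] irr csP v(4) by simp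
    hence "length cs \<le> card P" using card_mono[OF fin csP] distinct_card[of cs] by simp
    hence "(b, cs) \<in> ?D" using v(2) csP by simp
    moreover have "v = ?f (b, cs)" using v(1) by simp
    ultimately show "v \<in> ?f ` ?D" by (rule rev_image_eqI)
  qed
  moreover have "finite ?D"
  proof (rule finite_SigmaI)
    show "finite (A \<union> U1)" using fin AP U1P finite_subset by auto
    show "finite {cs. set cs \<subseteq> P \<and> length cs \<le> card P}" by (rule finite_lists_length_le[OF fin])
  qed
  ultimately show ?thesis by (rule finite_subset[OF _ finite_imageI])
qed

lemma single_in: "b \<in> A \<union> U1 \<Longrightarrow> p \<in> U2 \<Longrightarrow> lt b p \<Longrightarrow> lx U1 lam x b + x p \<in> V p"
  unfolding Vset_def by (rule CollectI, rule exI[of _ b], rule exI[of _ "[p]"]) simp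

lemma below_U2: "p \<in> U2 \<Longrightarrow> \<exists>b\<in>A. lt b p"
  using exists_below[OF mp, of p] U2P by blast

lemma V_ne: "p \<in> U2 \<Longrightarrow> V p \<noteq> {}"
  using below_U2 single_in by blast

lemma t_in: "p \<in> U2 \<Longrightarrow> t p \<in> V p"
  unfolding tt_def using V_fin V_ne Max_in by blast

lemma le_t: "v \<in> V p \<Longrightarrow> v \<le> t p"
  unfolding tt_def using V_fin Max_ge by blast

lemma P2: "b \<in> A \<union> U1 \<Longrightarrow> p \<in> U2 \<Longrightarrow> lt b p \<Longrightarrow> lx U1 lam x b + x p \<le> t p"
  using single_in le_t by blast

lemma P0: "p \<in> U2 \<Longrightarrow> x p \<le> t p"
  using below_U2 P2 lx0 by (smt (verit, ccfv_threshold) UnI1)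

lemma P1: assumes "r \<in> U2" "p \<in> U2" "lt r p" shows "t r + x p \<le> t p"
proof -
  obtain b cs where v: "t r = lx U1 lam x b + sum_list (map x cs)" "b \<in> A \<union> U1"
      "set cs \<subseteq> U2" "cs \<noteq> []" "last cs = r" "sorted_wrt lt (b # cs)"
    using t_in[OF assms(1)] unfolding Vset_def by blast
  have lastbc: "last (b # cs) = r" using v by simp
  have allP: "set (b # cs) \<subseteq> P" using v(2,3) AP U1P U2P by auto
  have "\<forall>e\<in>set (b # cs). lt e p"
  proof
    fix e assume e: "e \<in> set (b # cs)"
    have "e = r \<or> lt e r" using sorted_last[OF v(6) _ e] lastbc by simp
    moreover have "r \<in> P" "p \<in> P" using assms U2P by auto
    ultimately show "lt e p" using tr e allP assms(3) by blast
  qed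
  hence "sorted_wrt lt (b # cs @ [p])" using v(6)
    by (simp add: sorted_wrt_append)
  hence "lx U1 lam x b + sum_list (map x (cs @ [p])) \<in> V p"
    unfolding Vset_def using v assms by (intro CollectI exI[of _ b] exI[of _ "cs @ [p]"]) auto
  hence "lx U1 lam x b + sum_list (map x (cs @ [p])) \<le> t p" by (rule le_t)
  thus ?thesis using v(1) by simp
qed

lemma P3: assumes "p \<in> U2" "a \<in> A \<union> U1" "lt p a" shows "t p \<le> lx U1 lam x a"
proof -
  obtain b cs where v: "t p = lx U1 lam x b + sum_list (map x cs)" "b \<in> A \<union> U1"
      "set cs \<subseteq> U2" "cs \<noteq> []" "last cs = p" "sorted_wrt lt (b # cs)"
    using t_in[OF assms(1)] unfolding Vset_def by blast
  have lastbc: "last (b # cs) = p" using v by simp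
  have allP: "set (b # cs) \<subseteq> P" using v(2,3) AP U1P U2P by auto
  have "\<forall>e\<in>set (b # cs). lt e a"
  proof
    fix e assume e: "e \<in> set (b # cs)"
    have "e = p \<or> lt e p" using sorted_last[OF v(6) _ e] lastbc by simp
    moreover have "a \<in> P" "p \<in> P" using assms U2P AP U1P by auto
    ultimately show "lt e a" using tr e allP assms(3) by blast
  qed
  hence "sorted_wrt lt (b # cs @ [a])" using v(6)
    by (simp add: sorted_wrt_append)
  from xv[OF assms(2) v(2) v(4) v(3) this] v(1) show ?thesis by simp
qed


context
  fixes \<phi> :: "int \<Rightarrow> int" and mu :: "'a \<Rightarrow> nat"
  assumes mono: "\<And>a b. a \<le> b \<Longrightarrow> \<phi> a \<le> \<phi> b" and phi0: "\<phi> 0 = 0"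
    and phiA: "\<And>a. a \<in> A \<Longrightarrow> \<phi> (int (lam a)) = int (mu a)"
begin

abbreviation "y \<equiv> Tmap lt A U1 U2 lam x \<phi>"

lemma y_U1: "p \<in> U1 \<Longrightarrow> y p = \<phi> (x p)" by (simp add: Tmap_def)
lemma y_U2: "p \<in> U2 \<Longrightarrow> y p = \<phi> (t p) - \<phi> (t p - x p)" using disj by (auto simp: Tmap_def)

lemma lx_y: "a \<in> A \<union> U1 \<Longrightarrow> lx U1 mu y a = \<phi> (lx U1 lam x a)"
  using U1P phiA by (auto simp: lx_def Tmap_def)

lemma tele: "cs \<noteq> [] \<Longrightarrow> set cs \<subseteq> U2 \<Longrightarrow> sorted_wrt lt cs \<Longrightarrow>
   sum_list (map y cs) \<le> \<phi> (t (last cs)) - \<phi> (t (hd cs) - x (hd cs))"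
proof (induction cs)
  case Nil then show ?case by simp
next
  case (Cons c cs)
  show ?case
  proof (cases "cs = []")
    case True then show ?thesis using Cons y_U2 by simp
  next
    case False
    have IH: "sum_list (map y cs) \<le> \<phi> (t (last cs)) - \<phi> (t (hd cs) - x (hd cs))"
      using Cons False by simp
    have "lt c (hd cs)" using Cons.prems False by (cases cs) auto
    hence "t c + x (hd cs) \<le> t (hd cs)" using P1 Cons.prems False by (cases cs) auto
    hence "\<phi> (t c) \<le> \<phi> (t (hd cs) - x (hd cs))" by (intro mono) simp
    moreover have "y c = \<phi> (t c) - \<phi> (t c - x c)" using Cons.prems y_U2 by simp
    ultimately show ?thesis using IH False by simp
  qed
qed

lemma y_nonneg: "0 \<le> y p"
proof -
  have "p \<in> U1 \<Longrightarrow> ?thesis" using mono[OF x0[of p]] phi0 y_U1 by simp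
  moreover have "p \<in> U2 \<Longrightarrow> ?thesis" using mono[of "t p - x p" "t p"] x0[of p] y_U2 by simp
  ultimately show ?thesis by (auto simp: Tmap_def)
qed

lemma Tmap_in: "y \<in> Sint P lt A U1 U2 mu"
proof -
  have c1: "\<forall>p. p \<notin> P - A \<longrightarrow> y p = 0" using un by (auto simp: Tmap_def)
  have c2: "\<forall>p\<in>U1. \<forall>a\<in>A. lt p a \<longrightarrow> y p \<le> int (mu a)"
    using xi mono phiA y_U1 by metis
  have c3: "\<forall>q\<in>U1. \<forall>b\<in>A. lt b q \<longrightarrow> int (mu b) \<le> y q"
    using xii mono phiA y_U1 by metis
  have c4: "\<forall>p\<in>U1. \<forall>q\<in>U1. lt p q \<longrightarrow> y p \<le> y q"
    using xiii mono y_U1 by metis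
  have c5: "sum_list (map y cs) \<le> lx U1 mu y a - lx U1 mu y b"
    if a: "a \<in> A \<union> U1" and b: "b \<in> A \<union> U1" and cs: "cs \<noteq> []" "set cs \<subseteq> U2"
      and s: "sorted_wrt lt (b # cs @ [a])" for a b cs
  proof -
    have sc: "sorted_wrt lt cs" using s by (simp add: sorted_wrt_append)
    have h1: "lt b (hd cs)" using s cs by (cases cs) auto
    have h2: "lt (last cs) a" using s cs by (simp add: sorted_wrt_append)
    have hdU: "hd cs \<in> U2" "last cs \<in> U2" using cs by auto
    have "t (last cs) \<le> lx U1 lam x a" using P3[OF hdU(2) a h2] .
    hence m1: "\<phi> (t (last cs)) \<le> lx U1 mu y a" using lx_y[OF a] mono by simp
    have "lx U1 lam x b + x (hd cs) \<le> t (hd cs)" using P2[OF b hdU(1) h1] .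
    hence m2: "lx U1 mu y b \<le> \<phi> (t (hd cs) - x (hd cs))" using lx_y[OF b] mono by simp
    show ?thesis using tele[OF cs sc] m1 m2 by simp
  qed
  have c6: "sum_list (map y cs) \<le> y q"
    if q: "q \<in> U1" and cs: "set cs \<subseteq> U2" and s: "sorted_wrt lt (cs @ [q])" for q cs
  proof (cases "cs = []")
    case True then show ?thesis using y_nonneg by simp
  next
    case False
    have sc: "sorted_wrt lt cs" using s by (simp add: sorted_wrt_append)
    have h2: "lt (last cs) q" using s False by (simp add: sorted_wrt_append)
    have hdU: "hd cs \<in> U2" "last cs \<in> U2" using cs False by auto
    have "t (last cs) \<le> lx U1 lam x q" using P3[OF hdU(2) _ h2] q by simp
    hence m1: "\<phi> (t (last cs)) \<le> y q" using q y_U1 mono by (simp add: lx_def)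
    have "0 \<le> t (hd cs) - x (hd cs)" using P0[OF hdU(1)] by simp
    hence m2: "0 \<le> \<phi> (t (hd cs) - x (hd cs))" using mono phi0 by metis
    show ?thesis using tele[OF False cs sc] m1 m2 by simp
  qed
  show ?thesis unfolding Sint_def mem_Collect_eq
    apply (intro conjI)
    subgoal using y_nonneg by blast
    subgoal by (rule c1)
    subgoal by (rule c2)
    subgoal by (rule c3)
    subgoal by (rule c4)
    subgoal using c5 by blast
    subgoal using c6 by blast
    done
qed

end

end


lemma Sint_D:
  assumes "x \<in> Sint P lt A U1 U2 lam"
  shows "\<forall>p. 0 \<le> x p" "\<forall>p. p \<notin> P - A \<longrightarrow> x p = 0"
    "\<forall>p\<in>U1. \<forall>a\<in>A. lt p a \<longrightarrow> x p \<le> int (lam a)"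
    "\<forall>q\<in>U1. \<forall>b\<in>A. lt b q \<longrightarrow> int (lam b) \<le> x q"
    "\<forall>p\<in>U1. \<forall>q\<in>U1. lt p q \<longrightarrow> x p \<le> x q"
    "\<forall>a\<in>A \<union> U1. \<forall>b\<in>A \<union> U1. \<forall>cs. cs \<noteq> [] \<longrightarrow> set cs \<subseteq> U2 \<longrightarrow>
        sorted_wrt lt (b # cs @ [a]) \<longrightarrow>
        sum_list (map x cs) \<le> lx U1 lam x a - lx U1 lam x b"
    "\<forall>q\<in>U1. \<forall>cs. set cs \<subseteq> U2 \<longrightarrow> sorted_wrt lt (cs @ [q]) \<longrightarrow>
        sum_list (map x cs) \<le> x q"
proof -
  note H = assms[unfolded Sint_def mem_Collect_eq]
  show "\<forall>p. 0 \<le> x p" using H by (rule conjunct1)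
  note H2 = H[THEN conjunct2]
  show "\<forall>p. p \<notin> P - A \<longrightarrow> x p = 0" using H2 by (rule conjunct1)
  note H3 = H2[THEN conjunct2]
  show "\<forall>p\<in>U1. \<forall>a\<in>A. lt p a \<longrightarrow> x p \<le> int (lam a)" using H3 by (rule conjunct1)
  note H4 = H3[THEN conjunct2]
  show "\<forall>q\<in>U1. \<forall>b\<in>A. lt b q \<longrightarrow> int (lam b) \<le> x q" using H4 by (rule conjunct1)
  note H5 = H4[THEN conjunct2]
  show "\<forall>p\<in>U1. \<forall>q\<in>U1. lt p q \<longrightarrow> x p \<le> x q" using H5 by (rule conjunct1)
  note H6 = H5[THEN conjunct2]
  show "\<forall>a\<in>A \<union> U1. \<forall>b\<in>A \<union> U1. \<forall>cs. cs \<noteq> [] \<longrightarrow> set cs \<subseteq> U2 \<longrightarrow>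
        sorted_wrt lt (b # cs @ [a]) \<longrightarrow>
        sum_list (map x cs) \<le> lx U1 lam x a - lx U1 lam x b" using H6 by (rule conjunct1)
  show "\<forall>q\<in>U1. \<forall>cs. set cs \<subseteq> U2 \<longrightarrow> sorted_wrt lt (cs @ [q]) \<longrightarrow>
        sum_list (map x cs) \<le> x q" using H6 by (rule conjunct2)
qed

lemma zero_in: "(\<lambda>_. 0) \<in> Sint P lt A U1 U2 (\<lambda>_. 0)"
  unfolding Sint_def mem_Collect_eq lx_def by simp

lemma add_in:
  assumes x: "x \<in> Sint P lt A U1 U2 l1" and y: "y \<in> Sint P lt A U1 U2 l2"
  shows "(\<lambda>p. x p + y p) \<in> Sint P lt A U1 U2 (\<lambda>a. l1 a + l2 a)"
proof -
  note X = Sint_D[OF x] and Y = Sint_D[OF y]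
  have lxs: "lx U1 (\<lambda>a. l1 a + l2 a) (\<lambda>p. x p + y p) q = lx U1 l1 x q + lx U1 l2 y q" for q
    by (simp add: lx_def)
  have sl: "sum_list (map (\<lambda>p. x p + y p) cs) = sum_list (map x cs) + sum_list (map y cs)" for cs
    by (induction cs) auto
  show ?thesis unfolding Sint_def mem_Collect_eq lxs sl
    apply (intro conjI)
    subgoal using X(1) Y(1) by (simp add: add_nonneg_nonneg)
    subgoal using X(2) Y(2) by simp
    subgoal using X(3) Y(3) by (simp add: add_mono)
    subgoal using X(4) Y(4) by (simp add: add_mono)
    subgoal using X(5) Y(5) by (simp add: add_mono)
    subgoal
    proof (intro ballI allI impI)
      fix a b cs assume h: "a \<in> A \<union> U1" "b \<in> A \<union> U1" "cs \<noteq> []" "set cs \<subseteq> U2"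
        "sorted_wrt lt (b # cs @ [a])"
      have "sum_list (map x cs) \<le> lx U1 l1 x a - lx U1 l1 x b" using X(6) h by blast
      moreover have "sum_list (map y cs) \<le> lx U1 l2 y a - lx U1 l2 y b" using Y(6) h by blast
      ultimately show "sum_list (map x cs) + sum_list (map y cs)
          \<le> lx U1 l1 x a + lx U1 l2 y a - (lx U1 l1 x b + lx U1 l2 y b)" by simp
    qed
    subgoal
    proof (intro ballI allI impI)
      fix q cs assume h: "q \<in> U1" "set cs \<subseteq> U2" "sorted_wrt lt (cs @ [q])"
      have "sum_list (map x cs) \<le> x q" using X(7) h by blast
      moreover have "sum_list (map y cs) \<le> y q" using Y(7) h by blast
      ultimately show "sum_list (map x cs) + sum_list (map y cs) \<le> x q + y q" by simp
    qed
    done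
qed

lemma zero_only:
  assumes mp: "marked_poset P lt A" and adm: "admissible P lt A U1 U2"
    and x: "x \<in> Sint P lt A U1 U2 (\<lambda>_. 0)"
  shows "x = (\<lambda>_. 0)"
proof
  fix p
  interpret S: setting P lt A U1 U2 "\<lambda>_. 0" x using mp adm x by unfold_locales
  note X = Sint_D[OF x]
  show "x p = 0"
  proof (cases "p \<in> P - A")
    case False then show ?thesis using X(2) by blast
  next
    case True
    then obtain a where a: "a \<in> A" "lt p a" using exists_above[OF mp, of p] by blast
    show ?thesis
    proof (cases "p \<in> U1")
      case True
      then show ?thesis using X(3) a S.x0[of p] by force
    next
      case False
      hence p2: "p \<in> U2" using True S.un by blast
      have "S.t p \<le> lx U1 (\<lambda>_. 0) x a" using S.P3[OF p2 _ a(2)] a(1) by blast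
      moreover have "lx U1 (\<lambda>_. 0) x a = 0" using a(1) S.U1P by (auto simp: lx_def)
      ultimately show ?thesis using S.P0[OF p2] S.x0[of p] by simp
    qed
  qed
qed

lemma g_mono:
  fixes a b d :: int assumes "0 < d" "a \<le> b" shows "a - a div d \<le> b - b div d"
proof -
  have e1: "b div d * d + b mod d = b" by (rule div_mult_mod_eq)
  have e2: "0 \<le> b mod d" using assms(1) by simp
  have e3: "a div d * d + a mod d = a" by (rule div_mult_mod_eq)
  have e4: "a mod d < d" using assms(1) by simp
  have c1: "d * (b div d) = b div d * d" "d * (a div d) = a div d * d" by (rule mult.commute)+
  have h1: "d * (b div d) \<le> b" using e1 e2 c1 by linarith
  have h2: "a < d * (a div d) + d" using e3 e4 c1 by linarith
  have h3: "b - a \<le> d * (b - a)" using assms by (simp add: mult_le_cancel_right1)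
  have "d * (b div d - a div d) < d * (b - a + 1)"
    using h1 h2 h3 by (simp add: algebra_simps)
  hence "b div d - a div d < b - a + 1" using assms(1) by (simp add: mult_less_cancel_left_pos)
  thus ?thesis by simp
qed

lemma divh: "int (Suc n * l) div int (Suc n) = int l"
proof -
  have "int (Suc n * l) div int (Suc n) = int ((Suc n * l) div Suc n)" by (rule zdiv_int[symmetric])
  also have "\<dots> = int l" by (simp only: nonzero_mult_div_cancel_left Suc_neq_Zero not_False_eq_True)
  finally show ?thesis .
qed

theorem theorem2p1:
  fixes P A U1 U2 :: "'a set" and lt :: "'a \<Rightarrow> 'a \<Rightarrow> bool"
    and lam :: "'a \<Rightarrow> nat" and N :: nat
  assumes "marked_poset P lt A"
    and "admissible P lt A U1 U2"
  shows "S_lattice P lt A U1 U2 (\<lambda>a. N * lam a)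
           = minkowski_power N (S_lattice P lt A U1 U2 lam)"
proof -
  note mp = assms(1) and adm = assms(2)
  have sup: "minkowski_power N (Sint P lt A U1 U2 lam) \<subseteq> Sint P lt A U1 U2 (\<lambda>a. N * lam a)"
  proof (induction N)
    case 0 then show ?case using zero_in by simp
  next
    case (Suc n)
    show ?case
    proof
      fix z assume "z \<in> minkowski_power (Suc n) (Sint P lt A U1 U2 lam)"
      then obtain x y where z: "z = (\<lambda>p. x p + y p)" "x \<in> Sint P lt A U1 U2 lam"
        "y \<in> minkowski_power n (Sint P lt A U1 U2 lam)"
        unfolding minkowski_power.simps minkowski_sum_def by blast
      have y': "y \<in> Sint P lt A U1 U2 (\<lambda>a. n * lam a)" using Suc.IH z(3) by (rule subsetD)
      have zin: "z \<in> Sint P lt A U1 U2 (\<lambda>a. lam a + n * lam a)"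
        unfolding z(1) by (rule add_in[OF z(2) y'])
      have eq: "(\<lambda>a. lam a + n * lam a) = (\<lambda>a. Suc n * lam a)" by (simp add: fun_eq_iff)
      show "z \<in> Sint P lt A U1 U2 (\<lambda>a. Suc n * lam a)" using zin unfolding eq .
    qed
  qed
  have sub: "Sint P lt A U1 U2 (\<lambda>a. N * lam a) \<subseteq> minkowski_power N (Sint P lt A U1 U2 lam)"
  proof (induction N)
    case 0
    show ?case
    proof
      fix x assume "x \<in> Sint P lt A U1 U2 (\<lambda>a. 0 * lam a)"
      hence "x \<in> Sint P lt A U1 U2 (\<lambda>_. 0)" by simp
      thus "x \<in> minkowski_power 0 (Sint P lt A U1 U2 lam)" using zero_only[OF mp adm] by simp
    qed
  next
    case (Suc n)
    show ?case
    proof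
      fix x assume x: "x \<in> Sint P lt A U1 U2 (\<lambda>a. Suc n * lam a)"
      interpret S: setting P lt A U1 U2 "\<lambda>a. Suc n * lam a" x using mp adm x by unfold_locales
      define d where "d = int (Suc n)"
      have d0: "0 < d" by (simp add: d_def)
      define f where "f = (\<lambda>t::int. t div d)"
      define g where "g = (\<lambda>t::int. t - t div d)"
      have y: "Tmap lt A U1 U2 (\<lambda>a. Suc n * lam a) x f \<in> Sint P lt A U1 U2 lam"
      proof (rule S.Tmap_in)
        show "f a \<le> f b" if "a \<le> b" for a b using that d0 by (simp add: f_def zdiv_mono1)
        show "f 0 = 0" by (simp add: f_def)
        show "f (int (Suc n * lam a)) = int (lam a)" for a
          unfolding f_def d_def by (rule divh)
      qed
      have z: "Tmap lt A U1 U2 (\<lambda>a. Suc n * lam a) x g \<in> Sint P lt A U1 U2 (\<lambda>a. n * lam a)"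
      proof (rule S.Tmap_in)
        show "g a \<le> g b" if "a \<le> b" for a b using g_mono[OF d0 that] by (simp add: g_def)
        show "g 0 = 0" by (simp add: g_def)
        have "int (Suc n * lam a) div d = int (lam a)" for a
          unfolding d_def by (rule divh)
        thus "g (int (Suc n * lam a)) = int (n * lam a)" for a
          by (simp add: g_def)
      qed
      have "z' \<in> minkowski_power n (Sint P lt A U1 U2 lam)"
        if "z' = Tmap lt A U1 U2 (\<lambda>a. Suc n * lam a) x g" for z'
        using Suc.IH z that by blast
      moreover have "x = (\<lambda>p. Tmap lt A U1 U2 (\<lambda>a. Suc n * lam a) x f p
                           + Tmap lt A U1 U2 (\<lambda>a. Suc n * lam a) x g p)"
      proof
        fix p
        show "x p = Tmap lt A U1 U2 (\<lambda>a. Suc n * lam a) x f p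
                           + Tmap lt A U1 U2 (\<lambda>a. Suc n * lam a) x g p"
          using Sint_D(2)[OF x, rule_format, of p] S.un by (auto simp: Tmap_def f_def g_def)
      qed
      ultimately show "x \<in> minkowski_power (Suc n) (Sint P lt A U1 U2 lam)"
        unfolding minkowski_power.simps minkowski_sum_def using y by blast
    qed
  qed
  show ?thesis unfolding S_eq using sup sub by blast
qed

end
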